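(* Let $\pi$ be a probability density on $\mathbb{R}^d$ with $\pi(x)>0$ for all $x$ and $\log\pi\in C^1(\mathbb{R}^d)$. For $\lambda>0$ let $\pi^{(\lambda)}(x):=\lambda^{-1}\pi(x_1/\lambda,x_2,\dots,x_d)$. Let $\mu$ be a centred symmetric probability density on $\mathbb{R}^d$ satisfying the following condition: there exists $\lambda_0>0$ such that for all $x,y\in\mathbb{R}^d$ and all $\lambda<\lambda_0$ we have $\mu(\delta_\lambda)\ge\mu(\delta)$, where $\delta=y-x$ and $\delta_\lambda=(\lambda(y_1-x_1),y_2-x_2,\dots,y_d-x_d)$; and moreover $\sup_{\xi_1\in\mathbb{R}}\mu_1(\xi_1)<\infty$, where $\mu_1(\xi_1)=\int_{\mathbb{R}^{d-1}}\mu(\xi_1,\xi_2,\dots,\xi_d)\,d\xi_2\cdots d\xi_d$. Fix $\sigma>0$ and let $P^R_\lambda$ be the Metropolis--Hastings kernel with target $\pi^{(\lambda)}$ and random walk candidate kernel $Q^R(x,dy)=\sigma^{-d}\mu((y-x)/\sigma)\,dy$ (i.e. $y=x+\sigma\xi$, $\xi\sim\mu$). Assume $\mathrm{Gap}(P^R_1)>0$. Then $\mathrm{Gap}(P^R_\lambda)=\Theta(\lambda)$ as $\lambda\downarrow 0$.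
   Context: Metropolis--Hastings kernel with target density $\pi$ and candidate kernel $Q(x,dy)=q(x,y)dy$: $P(x,dy)=\alpha(x,y)Q(x,dy)+r(x)\delta_x(dy)$ with $\alpha(x,y)=\min\{1,\pi(y)q(y,x)/(\pi(x)q(x,y))\}$ and $r(x)=1-\int\alpha(x,y)Q(x,dy)$. For a $\pi$-reversible kernel $P$, $\mathrm{Gap}(P)=\inf_{f\in L^2_{0,1}(\pi)}\frac12\int (f(y)-f(x))^2\pi(dx)P(x,dy)$, where $L^2_{0,1}(\pi)=\{f:\mathbb{E}_\pi f=0,\ \mathrm{Var}_\pi f=1\}$. For positive functions, $F(\lambda)=\Theta(G(\lambda))$ as $\lambda\downarrow0$ means $\liminf_{\lambda\downarrow0}F/G>0$ and $\limsup_{\lambda\downarrow0}F/G<\infty$. *)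

theory Defs
  imports "HOL-Analysis.Analysis"
begin

text \<open>R^d is rendered as real^'n (d = CARD('n)); the distinguished "first" coordinate is k :: 'n.\<close>

definition coord_scale :: "real \<Rightarrow> 'n::finite \<Rightarrow> real^'n \<Rightarrow> real^'n" where
  "coord_scale l k x = (\<chi> i. if i = k then l * x $ i else x $ i)"

definition scaled_target :: "(real^'n::finite \<Rightarrow> real) \<Rightarrow> 'n \<Rightarrow> real \<Rightarrow> real^'n \<Rightarrow> real" where
  "scaled_target p k l x = p (coord_scale (1 / l) k x) / l"

definition prob_density :: "(real^'n::finite \<Rightarrow> real) \<Rightarrow> bool" where
  "prob_density f \<longleftrightarrow> f \<in> borel_measurable borel \<and> (\<forall>x. 0 \<le> f x)
     \<and> (\<integral>\<^sup>+ x. ennreal (f x) \<partial>lborel) = 1"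

definition log_C1 :: "(real^'n::finite \<Rightarrow> real) \<Rightarrow> bool" where
  "log_C1 p \<longleftrightarrow> (\<exists>D :: (real^'n) \<Rightarrow> ((real^'n) \<Rightarrow>\<^sub>L real).
      (\<forall>x. ((\<lambda>z. ln (p z)) has_derivative blinfun_apply (D x)) (at x)) \<and> continuous_on UNIV D)"

definition marginal1 :: "(real^'n::finite \<Rightarrow> real) \<Rightarrow> 'n \<Rightarrow> real \<Rightarrow> ennreal" where
  "marginal1 m k t = (\<integral>\<^sup>+ f. ennreal (m (\<chi> i. if i = k then t else f i))
                        \<partial>(PiM (UNIV - {k}) (\<lambda>_. lborel)))"

definition rw_proposal :: "(real^'n::finite \<Rightarrow> real) \<Rightarrow> real \<Rightarrow> real^'n \<Rightarrow> real^'n \<Rightarrow> real" where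
  "rw_proposal m s x y = (1 / s) ^ CARD('n) * m ((1 / s) *\<^sub>R (y - x))"

definition mh_accept :: "('a \<Rightarrow> real) \<Rightarrow> ('a \<Rightarrow> 'a \<Rightarrow> real) \<Rightarrow> 'a \<Rightarrow> 'a \<Rightarrow> real" where
  "mh_accept p q x y = min 1 (p y * q y x / (p x * q x y))"

definition mh_reject :: "(real^'n::finite \<Rightarrow> real) \<Rightarrow> (real^'n \<Rightarrow> real^'n \<Rightarrow> real) \<Rightarrow> real^'n \<Rightarrow> real" where
  "mh_reject p q x = 1 - (\<integral> y. mh_accept p q x y * q x y \<partial>lborel)"

text \<open>Integral of a nonnegative g against P(x,dy) = alpha(x,y) q(x,y) dy + r(x) delta_x(dy).\<close>
definition mh_kernel_nn_integral ::
  "(real^'n::finite \<Rightarrow> real) \<Rightarrow> (real^'n \<Rightarrow> real^'n \<Rightarrow> real) \<Rightarrow> real^'n \<Rightarrow> (real^'n \<Rightarrow> ennreal) \<Rightarrow> ennreal" where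
  "mh_kernel_nn_integral p q x g =
     (\<integral>\<^sup>+ y. ennreal (mh_accept p q x y * q x y) * g y \<partial>lborel) + ennreal (mh_reject p q x) * g x"

definition L2_01 :: "(real^'n::finite \<Rightarrow> real) \<Rightarrow> (real^'n \<Rightarrow> real) set" where
  "L2_01 p = {f. f \<in> borel_measurable borel
      \<and> integrable (density lborel (\<lambda>x. ennreal (p x))) (\<lambda>x. (f x)^2)
      \<and> integral\<^sup>L (density lborel (\<lambda>x. ennreal (p x))) f = 0
      \<and> integral\<^sup>L (density lborel (\<lambda>x. ennreal (p x)))
          (\<lambda>x. (f x - integral\<^sup>L (density lborel (\<lambda>x. ennreal (p x))) f)^2) = 1}"

definition mh_gap :: "(real^'n::finite \<Rightarrow> real) \<Rightarrow> (real^'n \<Rightarrow> real^'n \<Rightarrow> real) \<Rightarrow> ennreal" where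
  "mh_gap p q = (INF f \<in> L2_01 p. (1/2) *
      (\<integral>\<^sup>+ x. ennreal (p x) * mh_kernel_nn_integral p q x (\<lambda>y. ennreal ((f y - f x)^2)) \<partial>lborel))"

end

theory Submission
  imports Defs
begin


lemma coord_scale_nth[simp]: "coord_scale l k x $ i = (if i = k then l * x $ i else x $ i)"
  by (simp add: coord_scale_def)

lemma coord_scale_sum:
  fixes k :: "'n::finite"
  shows "(coord_scale l k :: real^'n \<Rightarrow> real^'n) = (\<lambda>u. \<Sum>j\<in>Basis. ((if j = axis k 1 then l else 1) * (u \<bullet> j)) *\<^sub>R j)"
proof
  fix u :: "real^'n"
  have "coord_scale l k u = (\<Sum>j\<in>Basis. (coord_scale l k u \<bullet> j) *\<^sub>R j)"
    by (simp add: euclidean_representation)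
  also have "\<dots> = (\<Sum>j\<in>Basis. ((if j = axis k 1 then l else 1) * (u \<bullet> j)) *\<^sub>R j)"
  proof (rule sum.cong)
    fix j :: "real^'n" assume "j \<in> Basis"
    then obtain i where j: "j = axis i 1" using axis_inverse by blast
    show "(coord_scale l k u \<bullet> j) *\<^sub>R j = ((if j = axis k 1 then l else 1) * (u \<bullet> j)) *\<^sub>R j"
      by (auto simp: j inner_axis axis_eq_axis)
  qed simp
  finally show "coord_scale l k u = (\<Sum>j\<in>Basis. ((if j = axis k 1 then l else 1) * (u \<bullet> j)) *\<^sub>R j)" .
qed

lemma coord_scale_measurable[measurable]: "coord_scale l k \<in> borel_measurable borel"
  by (subst coord_scale_sum) simp

lemma nn_integral_coord_scale:
  fixes F :: "real^'n::finite \<Rightarrow> ennreal"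
  assumes "l \<noteq> 0" and [measurable]: "F \<in> borel_measurable borel"
  shows "(\<integral>\<^sup>+x. F x \<partial>lborel) = ennreal \<bar>l\<bar> * (\<integral>\<^sup>+u. F (coord_scale l k u) \<partial>lborel)"
proof -
  let ?c = "\<lambda>j::real^'n. if j = axis k 1 then l else 1"
  have c: "\<And>j. j \<in> Basis \<Longrightarrow> ?c j \<noteq> 0" using assms by auto
  have pr: "(\<Prod>j\<in>Basis. \<bar>?c j\<bar>) = \<bar>l\<bar>"
    by (subst prod.cong[where h="\<lambda>j. if j = axis k 1 then \<bar>l\<bar> else 1"]) (auto simp: prod.delta)
  have "(\<integral>\<^sup>+x. F x \<partial>lborel) = (\<integral>\<^sup>+x. F x \<partial>(density (distr lborel borel (\<lambda>x. 0 + (\<Sum>j\<in>Basis. (?c j * (x \<bullet> j)) *\<^sub>R j))) (\<lambda>_. (\<Prod>j\<in>Basis. \<bar>?c j\<bar>))))"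
    by (subst lborel_affine_euclidean[where c="?c" and t=0]) (use c in auto)
  also have "\<dots> = ennreal \<bar>l\<bar> * (\<integral>\<^sup>+u. F (coord_scale l k u) \<partial>lborel)"
    unfolding pr by (simp add: nn_integral_density nn_integral_distr nn_integral_cmult coord_scale_sum[symmetric])
  finally show ?thesis .
qed

lemma nn_integral_affine_vec:
  fixes F :: "real^'n::finite \<Rightarrow> ennreal"
  assumes "c \<noteq> 0" and [measurable]: "F \<in> borel_measurable borel"
  shows "(\<integral>\<^sup>+y. F y \<partial>lborel) = ennreal (\<bar>c\<bar> ^ CARD('n)) * (\<integral>\<^sup>+z. F (t + c *\<^sub>R z) \<partial>lborel)"
  by (subst lborel_affine[OF assms(1), of t]) (simp add: nn_integral_density nn_integral_distr nn_integral_cmult)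

lemma vec_lambda_measurable[measurable]:
  "(\<lambda>f. \<chi> i. f i) \<in> borel_measurable (PiM (UNIV::'n::finite set) (\<lambda>_. (lborel::real measure)))"
proof -
  have "\<And>j::real^'n. j \<in> Basis \<Longrightarrow> (\<lambda>f. (\<chi> i. f i) \<bullet> j) \<in> borel_measurable (PiM (UNIV::'n set) (\<lambda>_. (lborel::real measure)))"
  proof -
    fix j :: "real^'n" assume "j \<in> Basis"
    then obtain i where j: "j = axis i 1" using axis_inverse by blast
    show "(\<lambda>f. (\<chi> i. f i) \<bullet> j) \<in> borel_measurable (PiM (UNIV::'n set) (\<lambda>_. (lborel::real measure)))"
      by (simp add: j inner_axis)
  qed
  then show ?thesis by (subst borel_measurable_euclidean_space) auto
qed

lemma lborel_vec: "(lborel :: (real^'n::finite) measure) = distr (PiM UNIV (\<lambda>_. lborel)) borel (\<lambda>f. \<chi> i. f i)"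
proof (rule lborel_eqI)
  interpret product_sigma_finite "\<lambda>_::'n. (lborel::real measure)" by standard
  fix l u :: "real^'n" assume le: "\<And>b. b \<in> Basis \<Longrightarrow> l \<bullet> b \<le> u \<bullet> b"
  have le': "l $ i \<le> u $ i" for i using le[of "axis i 1"] by (simp add: inner_axis)
  have pre: "(\<lambda>f. \<chi> i. f i) -` box l u \<inter> space (PiM UNIV (\<lambda>_. lborel)) = PiE UNIV (\<lambda>i. {l $ i <..< u $ i})"
    by (auto simp: space_PiM box_def Basis_vec_def inner_axis PiE_def extensional_def)
  have "emeasure (distr (PiM UNIV (\<lambda>_. lborel)) borel (\<lambda>f. \<chi> i. f i)) (box l u)
      = emeasure (PiM UNIV (\<lambda>_. lborel)) (PiE UNIV (\<lambda>i. {l $ i <..< u $ i}))"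
    by (simp add: emeasure_distr pre)
  also have "\<dots> = (\<Prod>i\<in>UNIV. ennreal (u $ i - l $ i))"
    by (subst emeasure_PiM) (auto simp: le')
  also have "\<dots> = ennreal (\<Prod>i\<in>UNIV. (u $ i - l $ i))"
    by (simp add: prod_ennreal le')
  also have "(\<Prod>i\<in>UNIV. (u $ i - l $ i)) = (\<Prod>b\<in>Basis. (u - l) \<bullet> b)"
  proof -
    have B: "(Basis :: (real^'n) set) = (\<lambda>i. axis i (1::real)) ` (UNIV :: 'n set)"
      by (auto simp: Basis_vec_def)
    have I: "inj (\<lambda>i::'n. axis i (1::real) :: real^'n)" by (auto simp: inj_def axis_eq_axis)
    show ?thesis unfolding B by (subst prod.reindex[OF I]) (simp add: inner_axis)
  qed
  finally show "emeasure (distr (PiM UNIV (\<lambda>_. lborel)) borel (\<lambda>f. \<chi> i. f i)) (box l u) = (\<Prod>b\<in>Basis. (u - l) \<bullet> b)" .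
qed simp


lemma nn_integral_marginal:
  fixes g :: "real^'n::finite \<Rightarrow> ennreal" and k :: 'n
  assumes [measurable]: "g \<in> borel_measurable borel"
  shows "(\<integral>\<^sup>+z. g z \<partial>lborel) = (\<integral>\<^sup>+ t. (\<integral>\<^sup>+ f. g (\<chi> i. if i = k then t else f i) \<partial>PiM (UNIV-{k}) (\<lambda>_. lborel)) \<partial>lborel)"
proof -
  interpret product_sigma_finite "\<lambda>_::'n. (lborel::real measure)" by standard
  have U: "(UNIV::'n set) = insert k (UNIV - {k})" by auto
  have "(\<integral>\<^sup>+z. g z \<partial>lborel) = (\<integral>\<^sup>+f. g (\<chi> i. f i) \<partial>PiM UNIV (\<lambda>_. lborel))"
    by (subst lborel_vec) (simp add: nn_integral_distr)
  also have "\<dots> = (\<integral>\<^sup>+f. g (\<chi> i. f i) \<partial>PiM (insert k (UNIV - {k})) (\<lambda>_. lborel))"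
    using U by simp
  also have "\<dots> = (\<integral>\<^sup>+ t. (\<integral>\<^sup>+ f. g (\<chi> i. (f(k := t)) i) \<partial>PiM (UNIV-{k}) (\<lambda>_. lborel)) \<partial>lborel)"
    by (rule product_nn_integral_insert_rev) (auto simp flip: U)
  also have "\<dots> = (\<integral>\<^sup>+ t. (\<integral>\<^sup>+ f. g (\<chi> i. if i = k then t else f i) \<partial>PiM (UNIV-{k}) (\<lambda>_. lborel)) \<partial>lborel)"
    by (simp add: fun_upd_apply)
  finally show ?thesis .
qed

lemma rw_proposal_sym:
  assumes "\<forall>x. m (- x) = m x"
  shows "rw_proposal m s y x = rw_proposal m s x y"
proof -
  have "(1 / s) *\<^sub>R (x - y) = - ((1 / s) *\<^sub>R (y - x))" by (simp add: algebra_simps)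
  then show ?thesis using assms by (simp add: rw_proposal_def)
qed

lemma rw_proposal_nonneg: "\<forall>x. 0 \<le> m x \<Longrightarrow> s > 0 \<Longrightarrow> 0 \<le> rw_proposal m s x y"
  by (simp add: rw_proposal_def)

lemma rw_proposal_measurable[measurable]:
  assumes [measurable]: "m \<in> borel_measurable borel"
  shows "(\<lambda>(x, y). rw_proposal m s x y) \<in> borel_measurable (borel \<Otimes>\<^sub>M borel)"
  unfolding rw_proposal_def by measurable

lemma vec_upd_measurable[measurable]:
  fixes k :: "'n::finite"
  shows "(\<lambda>f. (\<chi> i. if i = k then t else f i) :: real^'n) \<in> borel_measurable (PiM (UNIV - {k}) (\<lambda>_. (lborel::real measure)))"
proof -
  have "\<And>j::real^'n. j \<in> Basis \<Longrightarrow> (\<lambda>f. (\<chi> i. if i = k then t else f i) \<bullet> j) \<in> borel_measurable (PiM (UNIV - {k}) (\<lambda>_. (lborel::real measure)))"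
  proof -
    fix j :: "real^'n" assume "j \<in> Basis"
    then obtain i where j: "j = axis i 1" using axis_inverse by blast
    show "(\<lambda>f. (\<chi> i. if i = k then t else f i) \<bullet> j) \<in> borel_measurable (PiM (UNIV - {k}) (\<lambda>_. (lborel::real measure)))"
      by (cases "i = k") (simp_all add: j inner_axis)
  qed
  then show ?thesis by (subst borel_measurable_euclidean_space) auto
qed

lemma slab_bound:
  fixes m :: "real^'n::finite \<Rightarrow> real" and k :: 'n
  assumes [measurable]: "m \<in> borel_measurable borel" and m0: "\<forall>x. 0 \<le> m x" and s: "s > 0" and l: "l > 0"
    and M: "\<And>t. marginal1 m k t \<le> M"
  shows "(\<integral>\<^sup>+ y. ennreal (rw_proposal m s x y) * indicator {y. 0 < y$k \<and> y$k \<le> l} y \<partial>lborel) \<le> M * ennreal (l / s)"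
proof -
  let ?I = "{- (x$k) / s <.. (l - x$k) / s}"
  have "(\<integral>\<^sup>+ y. ennreal (rw_proposal m s x y) * indicator {y. 0 < y$k \<and> y$k \<le> l} y \<partial>lborel)
     = ennreal (s ^ CARD('n)) * (\<integral>\<^sup>+ z. ennreal (rw_proposal m s x (x + s *\<^sub>R z)) * indicator {y. 0 < y$k \<and> y$k \<le> l} (x + s *\<^sub>R z) \<partial>lborel)"
    using s by (subst nn_integral_affine_vec[where c=s and t=x]) (auto simp: rw_proposal_def)
  also have "\<dots> = (\<integral>\<^sup>+ z. ennreal (s ^ CARD('n)) * (ennreal (rw_proposal m s x (x + s *\<^sub>R z)) * indicator {y. 0 < y$k \<and> y$k \<le> l} (x + s *\<^sub>R z)) \<partial>lborel)"
    by (rule nn_integral_cmult[symmetric]) (simp add: rw_proposal_def)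
  also have "\<dots> = (\<integral>\<^sup>+ z. ennreal (m z) * indicator ?I (z$k) \<partial>lborel)"
  proof (rule nn_integral_cong)
    fix z :: "real^'n"
    have "ennreal (s ^ CARD('n)) * ennreal (rw_proposal m s x (x + s *\<^sub>R z)) = ennreal (m z)"
      using s m0 by (simp add: rw_proposal_def ennreal_mult'[symmetric] power_one_over field_simps)
    moreover have "indicator {y. 0 < y$k \<and> y$k \<le> l} (x + s *\<^sub>R z) = (indicator ?I (z$k) :: ennreal)"
      using s by (auto simp: indicator_def field_simps)
    ultimately show "ennreal (s ^ CARD('n)) * (ennreal (rw_proposal m s x (x + s *\<^sub>R z)) * indicator {y. 0 < y$k \<and> y$k \<le> l} (x + s *\<^sub>R z))
        = ennreal (m z) * indicator ?I (z$k)" by (simp add: mult.assoc[symmetric])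
  qed
  also have "\<dots> = (\<integral>\<^sup>+ t. (\<integral>\<^sup>+ f. ennreal (m (\<chi> i. if i = k then t else f i)) * indicator ?I t \<partial>PiM (UNIV-{k}) (\<lambda>_. lborel)) \<partial>lborel)"
    by (subst nn_integral_marginal[where k=k]) simp_all
  also have "\<dots> = (\<integral>\<^sup>+ t. marginal1 m k t * indicator ?I t \<partial>lborel)"
    unfolding marginal1_def by (rule nn_integral_cong, rule nn_integral_multc) measurable
  also have "\<dots> \<le> (\<integral>\<^sup>+ t. M * indicator ?I t \<partial>lborel)"
    by (rule nn_integral_mono) (simp add: M mult_right_mono)
  also have "\<dots> = M * ennreal (l / s)"
    using s l by (simp add: nn_integral_cmult_indicator diff_divide_distrib)
  finally show ?thesis .
qed


lemma coord_scale_inv[simp]: "l \<noteq> 0 \<Longrightarrow> coord_scale (1/l) k (coord_scale l k u) = u"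
  by (simp add: vec_eq_iff)

lemma coord_scale_1[simp]: "coord_scale 1 k x = x"
  by (simp add: vec_eq_iff)

lemma coord_scale_scaleR: "coord_scale l k (a *\<^sub>R x) = a *\<^sub>R coord_scale l k x"
  by (simp add: vec_eq_iff)

lemma coord_scale_diff: "coord_scale l k (x - y) = coord_scale l k x - coord_scale l k y"
  by (simp add: vec_eq_iff algebra_simps)

lemma scaled_target_1[simp]: "scaled_target p k 1 = p"
  by (simp add: scaled_target_def fun_eq_iff)

lemma scaled_target_T[simp]: "l \<noteq> 0 \<Longrightarrow> scaled_target p k l (coord_scale l k u) = p u / l"
  by (simp add: scaled_target_def)

lemma scaled_target_measurable[measurable]:
  assumes [measurable]: "p \<in> borel_measurable borel"
  shows "scaled_target p k l \<in> borel_measurable borel"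
  unfolding scaled_target_def by measurable

lemma density_scaled:
  fixes p :: "real^'n::finite \<Rightarrow> real" and k :: 'n
  assumes [measurable]: "p \<in> borel_measurable borel" and p0: "\<forall>x. 0 \<le> p x" and l: "l > 0"
  shows "density lborel (\<lambda>x. ennreal (scaled_target p k l x)) = distr (density lborel (\<lambda>x. ennreal (p x))) borel (coord_scale l k)"
proof (rule measure_eqI)
  fix A :: "(real^'n) set" assume A: "A \<in> sets (density lborel (\<lambda>x. ennreal (scaled_target p k l x)))"
  then have [measurable]: "A \<in> sets borel" by simp
  have "emeasure (density lborel (\<lambda>x. ennreal (scaled_target p k l x))) A
      = (\<integral>\<^sup>+x. ennreal (scaled_target p k l x) * indicator A x \<partial>lborel)"
    by (simp add: emeasure_density)
  also have "\<dots> = ennreal l * (\<integral>\<^sup>+u. ennreal (scaled_target p k l (coord_scale l k u)) * indicator A (coord_scale l k u) \<partial>lborel)"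
    using l by (subst nn_integral_coord_scale[where l=l and k=k]) auto
  also have "\<dots> = (\<integral>\<^sup>+u. ennreal l * (ennreal (p u / l) * indicator A (coord_scale l k u)) \<partial>lborel)"
    using l by (subst nn_integral_cmult) auto
  also have "\<dots> = (\<integral>\<^sup>+u. ennreal (p u) * indicator (coord_scale l k -` A) u \<partial>lborel)"
    using l p0 by (intro nn_integral_cong) (simp add: mult.assoc[symmetric] ennreal_mult'[symmetric] indicator_def)
  also have "\<dots> = emeasure (distr (density lborel (\<lambda>x. ennreal (p x))) borel (coord_scale l k)) A"
  proof -
    have [measurable]: "coord_scale l k -` A \<in> sets borel"
      by (rule measurable_sets_borel[OF coord_scale_measurable]) simp
    show ?thesis by (simp add: emeasure_distr emeasure_density)
  qed
  finally show "emeasure (density lborel (\<lambda>x. ennreal (scaled_target p k l x))) A = emeasure (distr (density lborel (\<lambda>x. ennreal (p x))) borel (coord_scale l k)) A" .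
qed simp

lemma L2_01_scaled:
  fixes p :: "real^'n::finite \<Rightarrow> real" and k :: 'n
  assumes [measurable]: "p \<in> borel_measurable borel" and p0: "\<forall>x. 0 \<le> p x" and l: "l > 0"
    and [measurable]: "f \<in> borel_measurable borel"
  shows "f \<in> L2_01 (scaled_target p k l) \<longleftrightarrow> (\<lambda>u. f (coord_scale l k u)) \<in> L2_01 p"
  unfolding L2_01_def mem_Collect_eq density_scaled[OF assms(1-3)]
  by (simp add: integrable_distr_eq integral_distr)


definition DF :: "(real^'n::finite \<Rightarrow> real) \<Rightarrow> (real^'n \<Rightarrow> real^'n \<Rightarrow> real) \<Rightarrow> (real^'n \<Rightarrow> real) \<Rightarrow> ennreal" where
  "DF p q f = (\<integral>\<^sup>+x. ennreal (p x) * (\<integral>\<^sup>+y. ennreal (q x y * min 1 (p y / p x)) * ennreal ((f y - f x)^2) \<partial>lborel) \<partial>lborel)"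

lemma accept_eq:
  assumes "\<forall>x. p x > 0" "\<forall>x y. q x y = q y x" "\<forall>x y. q x y \<ge> 0"
  shows "mh_accept p q x y * q x y = q x y * min 1 (p y / p x)"
proof (cases "q x y = 0")
  case False
  have "p y * q y x / (p x * q x y) = p y / p x" using False assms by (simp add: field_simps)
  then show ?thesis by (simp add: mh_accept_def mult.commute)
qed simp

lemma gap_DF:
  assumes "\<forall>x. p x > 0" "\<forall>x y. q x y = q y x" "\<forall>x y. q x y \<ge> 0"
  shows "mh_gap p q = (INF f\<in>L2_01 p. (1/2) * DF p q f)"
  unfolding mh_gap_def DF_def mh_kernel_nn_integral_def
  by (simp add: accept_eq[OF assms])

lemma DF_lower:
  fixes p m :: "real^'n::finite \<Rightarrow> real" and k :: 'n
  assumes [measurable]: "p \<in> borel_measurable borel" and p0: "\<forall>x. 0 < p x"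
    and [measurable]: "m \<in> borel_measurable borel" and m0: "\<forall>x. 0 \<le> m x"
    and s: "s > 0" and l: "l > 0" and mono: "\<And>z. m z \<le> m (coord_scale l k z)"
    and [measurable]: "f \<in> borel_measurable borel"
  shows "ennreal l * DF p (rw_proposal m s) (\<lambda>u. f (coord_scale l k u)) \<le> DF (scaled_target p k l) (rw_proposal m s) f"
proof -
  let ?q = "rw_proposal m s"
  let ?p' = "scaled_target p k l"
  let ?T = "coord_scale l k"
  let ?G = "\<lambda>x y. ennreal (?q x y * min 1 (?p' y / ?p' x)) * ennreal ((f y - f x)^2)"
  have mG[measurable]: "(\<lambda>(x, y). ?G x y) \<in> borel_measurable (borel \<Otimes>\<^sub>M borel)"
    unfolding rw_proposal_def scaled_target_def by measurable
  have "DF ?p' ?q f = ennreal l * (\<integral>\<^sup>+u. ennreal (?p' (?T u)) * (\<integral>\<^sup>+y. ?G (?T u) y \<partial>lborel) \<partial>lborel)"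
    unfolding DF_def using l by (subst nn_integral_coord_scale[where l=l and k=k]) auto
  also have "\<dots> = ennreal l * (\<integral>\<^sup>+u. ennreal (p u / l) * (ennreal l * (\<integral>\<^sup>+v. ?G (?T u) (?T v) \<partial>lborel)) \<partial>lborel)"
    using l by (intro arg_cong2[where f="(*)"] refl nn_integral_cong)
       (simp, subst nn_integral_coord_scale[where l=l and k=k], auto)
  also have "\<dots> \<ge> ennreal l * DF p ?q (\<lambda>u. f (?T u))"
    unfolding DF_def
  proof (intro mult_left_mono nn_integral_mono)
    fix u :: "real^'n"
    have "ennreal (p u / l) * (ennreal l * (\<integral>\<^sup>+v. ?G (?T u) (?T v) \<partial>lborel)) = ennreal (p u) * (\<integral>\<^sup>+v. ?G (?T u) (?T v) \<partial>lborel)"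
      using l p0 by (simp add: mult.assoc[symmetric] ennreal_mult'[symmetric] less_imp_le)
    moreover have "(\<integral>\<^sup>+v. ennreal (?q u v * min 1 (p v / p u)) * ennreal ((f (?T v) - f (?T u))^2) \<partial>lborel) \<le> (\<integral>\<^sup>+v. ?G (?T u) (?T v) \<partial>lborel)"
    proof (rule nn_integral_mono)
      fix v :: "real^'n"
      have qq: "?q u v \<le> ?q (?T u) (?T v)"
        using mono[of "(1/s) *\<^sub>R (v - u)"] s
        by (simp add: rw_proposal_def coord_scale_scaleR coord_scale_diff)
      have "?q u v * min 1 (p v / p u) \<le> ?q (?T u) (?T v) * min 1 (p v / p u)"
        using qq p0 by (intro mult_right_mono) (auto simp: less_imp_le)
      then show "ennreal (?q u v * min 1 (p v / p u)) * ennreal ((f (?T v) - f (?T u))^2) \<le> ?G (?T u) (?T v)"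
        using l by (auto intro!: mult_right_mono ennreal_leI)
    qed
    ultimately show "ennreal (p u) * (\<integral>\<^sup>+v. ennreal (?q u v * min 1 (p v / p u)) * ennreal ((f (?T v) - f (?T u))^2) \<partial>lborel)
        \<le> ennreal (p u / l) * (ennreal l * (\<integral>\<^sup>+v. ?G (?T u) (?T v) \<partial>lborel))"
      by (simp add: mult_left_mono)
  qed simp
  finally show ?thesis .
qed


lemma DF_upper:
  fixes pp m :: "real^'n::finite \<Rightarrow> real" and k :: 'n
  assumes [measurable]: "pp \<in> borel_measurable borel" and p0: "\<forall>x. 0 < pp x"
    and p1: "(\<integral>\<^sup>+x. ennreal (pp x) \<partial>lborel) = 1"
    and [measurable]: "m \<in> borel_measurable borel" and m0: "\<forall>x. 0 \<le> m x" and msym: "\<forall>x. m (- x) = m x"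
    and s: "s > 0" and l: "l > 0" and M: "\<And>t. marginal1 m k t \<le> M"
  shows "DF pp (rw_proposal m s) (\<lambda>x. c * (indicator {y. 0 < y$k \<and> y$k \<le> l} x - a)) \<le> 2 * (ennreal (c^2) * (M * ennreal (l / s)))"
proof -
  let ?q = "rw_proposal m s"
  let ?A = "{y::real^'n. 0 < y$k \<and> y$k \<le> l}"
  let ?f = "\<lambda>x. c * (indicator ?A x - a)"
  define S where "S = M * ennreal (l / s)"
  have [measurable]: "?A \<in> sets borel" by measurable
  have slab: "\<And>x. (\<integral>\<^sup>+ y. ennreal (?q x y) * indicator ?A y \<partial>lborel) \<le> S"
    unfolding S_def by (rule slab_bound) (use assms in auto)
  have q0: "\<And>x y. 0 \<le> ?q x y" using m0 s by (simp add: rw_proposal_def)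
  have qs: "\<And>x y. ?q y x = ?q x y" using rw_proposal_sym[OF msym] by blast
  define X1 where "X1 x y = ennreal (c^2) * (ennreal (?q x y) * ennreal (pp y) * indicator ?A x)" for x y
  define X2 where "X2 x y = ennreal (c^2) * (ennreal (pp x) * (ennreal (?q x y) * indicator ?A y))" for x y
  have [measurable]: "(\<lambda>(x, y). X1 x y) \<in> borel_measurable (borel \<Otimes>\<^sub>M borel)"
    unfolding X1_def rw_proposal_def by measurable
  have [measurable]: "(\<lambda>(x, y). X2 x y) \<in> borel_measurable (borel \<Otimes>\<^sub>M borel)"
    unfolding X2_def rw_proposal_def by measurable
  have pw: "ennreal (pp x) * (ennreal (?q x y * min 1 (pp y / pp x)) * ennreal ((?f y - ?f x)^2)) \<le> X1 x y + X2 x y" for x y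
  proof -
    have mn: "pp x * min 1 (pp y / pp x) = min (pp x) (pp y)"
      using p0[rule_format, of x] by (simp add: min_def field_simps)
    have "pp x * (?q x y * min 1 (pp y / pp x)) * (?f y - ?f x)^2
        \<le> c^2 * (?q x y * pp y * indicator ?A x) + c^2 * (pp x * (?q x y * indicator ?A y))"
    proof -
      have "pp x * (?q x y * min 1 (pp y / pp x)) * (?f y - ?f x)^2 = c^2 * ?q x y * (min (pp x) (pp y) * (indicator ?A y - indicator ?A x)^2)"
        by (simp add: mn[symmetric] power2_eq_square algebra_simps)
      also have "\<dots> \<le> c^2 * ?q x y * (pp y * indicator ?A x + pp x * indicator ?A y)"
        using p0 q0 by (intro mult_left_mono) (auto simp: indicator_def min_def less_imp_le)
      finally show ?thesis by (simp add: algebra_simps)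
    qed
    then have le: "ennreal (pp x * (?q x y * min 1 (pp y / pp x)) * (?f y - ?f x)^2)
        \<le> ennreal (c^2 * (?q x y * pp y * indicator ?A x) + c^2 * (pp x * (?q x y * indicator ?A y)))"
      by (rule ennreal_leI)
    have nn: "0 \<le> min 1 (pp y / pp x)" using p0 by (simp add: less_imp_le)
    have e1: "ennreal (pp x) * (ennreal (?q x y * min 1 (pp y / pp x)) * ennreal ((?f y - ?f x)^2))
        = ennreal (pp x * (?q x y * min 1 (pp y / pp x)) * (?f y - ?f x)^2)"
      using p0 q0 nn by (simp add: ennreal_mult less_imp_le mult.assoc)
    have e2: "ennreal (c^2 * (?q x y * pp y * indicator ?A x) + c^2 * (pp x * (?q x y * indicator ?A y))) = X1 x y + X2 x y"
    proof -
      have a1: "0 \<le> pp x" "0 \<le> pp y" using p0 by (auto simp: less_imp_le)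
      have h1: "0 \<le> c^2 * (?q x y * pp y * indicator ?A x)" using a1 q0 by simp
      have h2: "0 \<le> c^2 * (pp x * (?q x y * indicator ?A y))" using a1 q0 by simp
      show ?thesis unfolding X1_def X2_def ennreal_plus[OF h1 h2] using a1 q0
        by (simp add: ennreal_mult' ennreal_indicator)
    qed
    show ?thesis using le e1 e2 by simp
  qed
  have "DF pp ?q ?f = (\<integral>\<^sup>+x. (\<integral>\<^sup>+y. ennreal (pp x) * (ennreal (?q x y * min 1 (pp y / pp x)) * ennreal ((?f y - ?f x)^2)) \<partial>lborel) \<partial>lborel)"
    unfolding DF_def
    by (intro nn_integral_cong nn_integral_cmult[symmetric]) (simp add: rw_proposal_def)
  also have "\<dots> \<le> (\<integral>\<^sup>+x. (\<integral>\<^sup>+y. X1 x y + X2 x y \<partial>lborel) \<partial>lborel)"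
    by (intro nn_integral_mono pw)
  also have "\<dots> = (\<integral>\<^sup>+x. (\<integral>\<^sup>+y. X1 x y \<partial>lborel) + (\<integral>\<^sup>+y. X2 x y \<partial>lborel) \<partial>lborel)"
    by (intro nn_integral_cong nn_integral_add) simp_all
  also have "\<dots> = (\<integral>\<^sup>+x. (\<integral>\<^sup>+y. X1 x y \<partial>lborel) \<partial>lborel) + (\<integral>\<^sup>+x. (\<integral>\<^sup>+y. X2 x y \<partial>lborel) \<partial>lborel)"
    by (rule nn_integral_add) simp_all
  finally have main: "DF pp ?q ?f \<le> (\<integral>\<^sup>+x. (\<integral>\<^sup>+y. X1 x y \<partial>lborel) \<partial>lborel) + (\<integral>\<^sup>+x. (\<integral>\<^sup>+y. X2 x y \<partial>lborel) \<partial>lborel)" .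
  have I2: "(\<integral>\<^sup>+x. (\<integral>\<^sup>+y. X2 x y \<partial>lborel) \<partial>lborel) \<le> ennreal (c^2) * S"
  proof -
    have "(\<integral>\<^sup>+x. (\<integral>\<^sup>+y. X2 x y \<partial>lborel) \<partial>lborel) = (\<integral>\<^sup>+x. ennreal (c^2) * ennreal (pp x) * (\<integral>\<^sup>+y. ennreal (?q x y) * indicator ?A y \<partial>lborel) \<partial>lborel)"
      unfolding X2_def by (intro nn_integral_cong) (subst nn_integral_cmult[symmetric], simp add: rw_proposal_def, simp add: mult.assoc)
    also have "\<dots> \<le> (\<integral>\<^sup>+x. ennreal (c^2) * S * ennreal (pp x) \<partial>lborel)"
    proof (intro nn_integral_mono)
      fix x
      have "ennreal (c^2) * ennreal (pp x) * (\<integral>\<^sup>+y. ennreal (?q x y) * indicator ?A y \<partial>lborel) \<le> ennreal (c^2) * ennreal (pp x) * S"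
        by (rule mult_left_mono[OF slab]) simp
      then show "ennreal (c^2) * ennreal (pp x) * (\<integral>\<^sup>+y. ennreal (?q x y) * indicator ?A y \<partial>lborel) \<le> ennreal (c^2) * S * ennreal (pp x)"
        by (simp add: mult_ac)
    qed
    also have "\<dots> = ennreal (c^2) * S"
      by (subst nn_integral_cmult) (simp_all add: p1)
    finally show ?thesis .
  qed
  have I1: "(\<integral>\<^sup>+x. (\<integral>\<^sup>+y. X1 x y \<partial>lborel) \<partial>lborel) \<le> ennreal (c^2) * S"
  proof -
    have "(\<integral>\<^sup>+x. (\<integral>\<^sup>+y. X1 x y \<partial>lborel) \<partial>lborel) = (\<integral>\<^sup>+y. (\<integral>\<^sup>+x. X1 x y \<partial>lborel) \<partial>lborel)"
      by (rule lborel_pair.Fubini'[symmetric, where f=X1]) simp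
    also have "\<dots> = (\<integral>\<^sup>+y. ennreal (c^2) * ennreal (pp y) * (\<integral>\<^sup>+x. ennreal (?q y x) * indicator ?A x \<partial>lborel) \<partial>lborel)"
      unfolding X1_def by (intro nn_integral_cong) (subst nn_integral_cmult[symmetric], simp add: rw_proposal_def, simp add: qs mult_ac)
    also have "\<dots> \<le> (\<integral>\<^sup>+x. ennreal (c^2) * S * ennreal (pp x) \<partial>lborel)"
    proof (intro nn_integral_mono)
      fix x
      have "ennreal (c^2) * ennreal (pp x) * (\<integral>\<^sup>+y. ennreal (?q x y) * indicator ?A y \<partial>lborel) \<le> ennreal (c^2) * ennreal (pp x) * S"
        by (rule mult_left_mono[OF slab]) simp
      then show "ennreal (c^2) * ennreal (pp x) * (\<integral>\<^sup>+y. ennreal (?q x y) * indicator ?A y \<partial>lborel) \<le> ennreal (c^2) * S * ennreal (pp x)"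
        by (simp add: mult_ac)
    qed
    also have "\<dots> = ennreal (c^2) * S"
      by (subst nn_integral_cmult) (simp_all add: p1)
    finally show ?thesis .
  qed
  from order_trans[OF main add_mono[OF I1 I2]] show ?thesis unfolding S_def by (simp add: mult_2)
qed


lemma density_pos_measure:
  fixes p :: "real^'n::finite \<Rightarrow> real"
  assumes [measurable]: "p \<in> borel_measurable borel" and p0: "\<forall>x. 0 < p x"
    and B[measurable]: "B \<in> sets borel" and sub: "box l u \<subseteq> B" and lu: "\<And>i. l$i < u$i"
  shows "emeasure (density lborel (\<lambda>x. ennreal (p x))) B \<noteq> 0"
proof
  assume "emeasure (density lborel (\<lambda>x. ennreal (p x))) B = 0"
  then have "(\<integral>\<^sup>+x. ennreal (p x) * indicator B x \<partial>lborel) = 0"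
    by (simp add: emeasure_density)
  then have "AE x in lborel. ennreal (p x) * indicator B x = 0"
    by (subst (asm) nn_integral_0_iff_AE) simp_all
  then have "AE x in lborel. x \<notin> B"
    by eventually_elim (use p0 in \<open>auto simp: indicator_def ennreal_eq_0_iff not_le[symmetric]\<close>)
  then have "B \<in> null_sets lborel" by (subst AE_iff_null_sets) simp_all
  then have "emeasure lborel (box l u) = 0"
    by (meson B emeasure_eq_0 null_setsD1 null_setsD2 sets_lborel sub box_borel)
  moreover have "emeasure lborel (box l u) \<noteq> 0"
  proof -
    have "box l u \<noteq> {}" using lu by (auto simp: box_ne_empty Basis_vec_def inner_axis)
    then have lt: "\<forall>i\<in>Basis. l \<bullet> i < u \<bullet> i" by (simp add: box_ne_empty)
    then have "0 < (\<Prod>b\<in>Basis. u \<bullet> b - l \<bullet> b)" by (intro prod_pos) auto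
    then show ?thesis using emeasure_lborel_box_eq[of l u] lt
      by (auto simp: box_ne_empty inner_diff_left ennreal_eq_0_iff)
  qed
  ultimately show False by simp
qed


lemma test_fn:
  fixes p :: "real^'n::finite \<Rightarrow> real" and k :: 'n
  assumes [measurable]: "p \<in> borel_measurable borel" and p0: "\<forall>x. 0 < p x"
    and p1: "(\<integral>\<^sup>+x. ennreal (p x) \<partial>lborel) = 1"
  shows "\<exists>c a. (\<lambda>u. c * (indicator {u. 0 < u$k \<and> u$k \<le> 1} u - a)) \<in> L2_01 p"
proof -
  define P where "P = density lborel (\<lambda>x. ennreal (p x))"
  define K where "K = {u::real^'n. 0 < u$k \<and> u$k \<le> 1}"
  have [measurable]: "K \<in> sets borel" unfolding K_def by measurable
  have sP[simp]: "sets P = sets borel" "space P = UNIV" by (simp_all add: P_def)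
  have PU: "emeasure P UNIV = 1" using p1 by (simp add: P_def emeasure_density)
  interpret P: finite_measure P by (rule finite_measureI) (simp add: PU)
  have PU': "measure P UNIV = 1" using PU by (simp add: measure_def)
  define a where "a = measure P K"
  have K0: "emeasure P K \<noteq> 0" unfolding P_def
    by (rule density_pos_measure[where l="\<chi> i. 0" and u="\<chi> i. 1"])
       (auto simp: K_def mem_box_cart p0, metis less_imp_le)
  have Kc0: "emeasure P (UNIV - K) \<noteq> 0" unfolding P_def
    by (rule density_pos_measure[where l="\<chi> i. if i = k then 1 else 0" and u="\<chi> i. 2"])
       (auto simp: K_def mem_box_cart p0 split: if_splits)
  have a0: "0 < a" using K0 unfolding a_def
    by (simp add: P.emeasure_eq_measure ennreal_eq_0_iff)
  have "measure P (UNIV - K) > 0" using Kc0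
    by (simp add: P.emeasure_eq_measure ennreal_eq_0_iff)
  then have a1: "a < 1" using P.finite_measure_compl[of K] PU' by (simp add: a_def)
  define c where "c = 1 / sqrt (a * (1 - a))"
  have cc: "c^2 * (a * (1 - a)) = 1" using a0 a1 by (simp add: c_def power_divide)
  let ?g = "\<lambda>u. c * (indicator K u - a)"
  have int0: "integral\<^sup>L P ?g = 0"
    by (simp add: a_def P.emeasure_eq_measure PU')
  have sq: "(?g x - 0)^2 = c^2 * ((1 - 2 * a) * indicator K x + a^2)" for x
    by (auto simp: indicator_def power2_eq_square algebra_simps)
  have int1: "integral\<^sup>L P (\<lambda>x. (?g x - integral\<^sup>L P ?g)^2) = 1"
    unfolding int0 sq using cc
    by (simp add: a_def P.emeasure_eq_measure PU' algebra_simps power2_eq_square)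
  have intg: "integrable P (\<lambda>x. (?g x)^2)"
  proof (rule P.integrable_const_bound[where B="c^2"])
    show "AE x in P. norm ((?g x)^2) \<le> c^2"
    proof (rule AE_I2)
      fix x
      have "(indicator K x - a)^2 \<le> (1::real)" using a0 a1 by (auto simp: indicator_def power2_eq_square mult_le_one)
      then show "norm ((?g x)^2) \<le> c^2"
        by (simp add: power_mult_distrib mult_left_le)
    qed
  qed (unfold P_def, measurable)
  have "?g \<in> L2_01 p"
    unfolding L2_01_def mem_Collect_eq using intg int0 int1 by (simp add: P_def)
  then show ?thesis unfolding K_def by blast
qed




theorem theorem2p1:
  fixes p m :: "real^'n::finite \<Rightarrow> real" and k :: 'n and \<sigma> :: real
  assumes p_dens: "prob_density p"
    and p_pos: "\<forall>x. p x > 0"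
    and p_C1: "log_C1 p"
    and m_dens: "prob_density m"
    and m_sym: "\<forall>x. m (- x) = m x"
    and m_centred: "(\<integral> x. m x *\<^sub>R x \<partial>lborel) = 0"
    and m_mono: "\<exists>l0>0. \<forall>x y l. 0 < l \<and> l < l0 \<longrightarrow> m (coord_scale l k (y - x)) \<ge> m (y - x)"
    and m_marg: "(SUP t. marginal1 m k t) < \<infinity>"
    and sigma_pos: "\<sigma> > 0"
    and gap1: "mh_gap (scaled_target p k 1) (rw_proposal m \<sigma>) > 0"
  shows "Liminf (at_right (0::real)) (\<lambda>l. mh_gap (scaled_target p k l) (rw_proposal m \<sigma>) / ennreal l) > 0
       \<and> Limsup (at_right (0::real)) (\<lambda>l. mh_gap (scaled_target p k l) (rw_proposal m \<sigma>) / ennreal l) < \<infinity>"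
proof -
  have pm[measurable]: "p \<in> borel_measurable borel" and p1: "(\<integral>\<^sup>+x. ennreal (p x) \<partial>lborel) = 1"
    using p_dens by (auto simp: prob_density_def)
  have [measurable]: "m \<in> borel_measurable borel" and m0: "\<forall>x. 0 \<le> m x"
    using m_dens by (auto simp: prob_density_def)
  let ?q = "rw_proposal m \<sigma>"
  have qs: "\<forall>x y. ?q x y = ?q y x" using rw_proposal_sym[OF m_sym] by metis
  have q0: "\<forall>x y. ?q x y \<ge> 0" using m0 sigma_pos by (simp add: rw_proposal_def)
  have pl_pos: "\<forall>x. scaled_target p k l x > 0" if "l > 0" for l
    using p_pos that by (simp add: scaled_target_def)
  define G1 where "G1 = mh_gap p ?q"
  have G1: "G1 > 0" using gap1 by (simp add: G1_def)
  obtain l0 where l0: "l0 > 0" and mono0: "\<forall>x y l. 0 < l \<and> l < l0 \<longrightarrow> m (coord_scale l k (y - x)) \<ge> m (y - x)"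
    using m_mono by blast
  define M where "M = (SUP t. marginal1 m k t)"
  have M: "\<And>t. marginal1 m k t \<le> M" unfolding M_def by (rule SUP_upper) simp
  have Mfin: "M < \<infinity>" using m_marg unfolding M_def .
  have low: "G1 \<le> mh_gap (scaled_target p k l) ?q / ennreal l" if l: "0 < l" "l < l0" for l
  proof -
    have mono: "\<And>z. m z \<le> m (coord_scale l k z)"
      using mono0 l by (metis diff_zero)
    have "ennreal l * G1 \<le> mh_gap (scaled_target p k l) ?q"
      unfolding gap_DF[OF pl_pos[OF l(1)] qs q0] G1_def gap_DF[OF p_pos qs q0]
    proof (rule INF_greatest)
      fix f assume f: "f \<in> L2_01 (scaled_target p k l)"
      then have [measurable]: "f \<in> borel_measurable borel" by (simp add: L2_01_def)
      have g: "(\<lambda>u. f (coord_scale l k u)) \<in> L2_01 p"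
        using f L2_01_scaled[of p l f k] p_pos l by (auto simp: less_imp_le)
      have "ennreal l * (INF g\<in>L2_01 p. (1/2) * DF p ?q g) \<le> ennreal l * ((1/2) * DF p ?q (\<lambda>u. f (coord_scale l k u)))"
        by (intro mult_left_mono INF_lower g) simp
      also have "\<dots> = (1/2) * (ennreal l * DF p ?q (\<lambda>u. f (coord_scale l k u)))"
        by (simp add: mult_ac)
      also have "\<dots> \<le> (1/2) * DF (scaled_target p k l) ?q f"
        by (intro mult_left_mono DF_lower) (use p_pos m0 sigma_pos l mono in auto)
      finally show "ennreal l * (INF g\<in>L2_01 p. (1/2) * DF p ?q g) \<le> (1/2) * DF (scaled_target p k l) ?q f" .
    qed
    then have "(G1 * ennreal l) / ennreal l \<le> mh_gap (scaled_target p k l) ?q / ennreal l"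
      by (intro divide_right_mono_ennreal) (simp add: mult.commute)
    then show ?thesis using l by (simp add: ennreal_mult_divide_eq)
  qed
  have ev1: "eventually (\<lambda>l. G1 \<le> mh_gap (scaled_target p k l) ?q / ennreal l) (at_right (0::real))"
    using eventually_at_right_real[OF l0] by (rule eventually_mono) (simp add: low)
  have part1: "Liminf (at_right (0::real)) (\<lambda>l. mh_gap (scaled_target p k l) ?q / ennreal l) > 0"
    using Liminf_bounded[OF ev1] G1 by (rule order.strict_trans2[rotated])
  obtain c a where g: "(\<lambda>u. c * (indicator {u. 0 < u$k \<and> u$k \<le> 1} u - a)) \<in> L2_01 p"
    using test_fn[OF pm p_pos p1, of k] by blast
  define C where "C = ennreal (c^2) * (M * ennreal (1 / \<sigma>))"
  have up: "mh_gap (scaled_target p k l) ?q / ennreal l \<le> C" if l: "0 < l" for l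
  proof -
    let ?A = "{y::real^'n. 0 < y$k \<and> y$k \<le> l}"
    let ?f = "\<lambda>x. c * (indicator ?A x - a)"
    have fT: "?f (coord_scale l k u) = c * (indicator {u. 0 < u$k \<and> u$k \<le> 1} u - a)" for u
      using l by (simp add: indicator_def zero_less_mult_iff)
    have f: "?f \<in> L2_01 (scaled_target p k l)"
      using L2_01_scaled[of p l ?f k] p_pos l g by (simp add: fT less_imp_le)
    have pl1: "(\<integral>\<^sup>+x. ennreal (scaled_target p k l x) \<partial>lborel) = 1"
    proof -
      have "(\<integral>\<^sup>+x. ennreal (scaled_target p k l x) \<partial>lborel) = emeasure (density lborel (\<lambda>x. ennreal (scaled_target p k l x))) UNIV"
        by (simp add: emeasure_density)
      also have "\<dots> = emeasure (distr (density lborel (\<lambda>x. ennreal (p x))) borel (coord_scale l k)) UNIV"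
        using p_pos l by (subst density_scaled) (auto simp: less_imp_le)
      also have "\<dots> = 1" using p1 by (simp add: emeasure_distr emeasure_density)
      finally show ?thesis .
    qed
    have "mh_gap (scaled_target p k l) ?q \<le> (1/2) * DF (scaled_target p k l) ?q ?f"
      unfolding gap_DF[OF pl_pos[OF l] qs q0] by (rule INF_lower[OF f])
    also have "\<dots> \<le> (1/2) * (2 * (ennreal (c^2) * (M * ennreal (l / \<sigma>))))"
      by (intro mult_left_mono DF_upper) (use pl_pos[OF l] pl1 m0 m_sym sigma_pos l M in auto)
    also have "\<dots> = C * ennreal l"
    proof -
      have e: "ennreal (l/\<sigma>) = ennreal (1/\<sigma>) * ennreal l"
        using l sigma_pos by (subst ennreal_mult[symmetric]) auto
      have h: "(1/2) * (2 * X) = (X::ennreal)" for X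
        by (simp add: mult.assoc[symmetric] ennreal_divide_times)
      show ?thesis unfolding h e C_def by (simp add: mult_ac)
    qed
    finally have "mh_gap (scaled_target p k l) ?q / ennreal l \<le> (C * ennreal l) / ennreal l"
      by (rule divide_right_mono_ennreal)
    then show ?thesis using l by (simp add: ennreal_mult_divide_eq)
  qed
  have ev2: "eventually (\<lambda>l. mh_gap (scaled_target p k l) ?q / ennreal l \<le> C) (at_right (0::real))"
    using eventually_at_right_real[of 0 1, OF zero_less_one] by (rule eventually_mono) (rule up, simp)
  have Cfin: "C < \<infinity>" using Mfin by (simp add: C_def ennreal_mult_less_top)
  have part2: "Limsup (at_right (0::real)) (\<lambda>l. mh_gap (scaled_target p k l) ?q / ennreal l) < \<infinity>"
    using Limsup_bounded[OF ev2] Cfin by (rule order.strict_trans1)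
  show ?thesis using part1 part2 by simp
qed

end
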